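(* In the unit-cost arithmetic model, given integers $n\ge1$, $k\ge0$ and $0\le i<\binom{n-1+k}{k}$, the multiset of rank $i$ among all multisets of $k$ elements from $\{0,\dots,n-1\}$ (ordered lexicographically by their non-increasing element sequences, zero-based ranks) can be computed in $O(k^2\log n)$ time.
   Context: Each multiset is represented by the sequence of its elements in non-increasing order; multisets are ordered lexicographically by these sequences, and ranks start at $0$. Arithmetic operations on integers are assumed to take constant time. *)

theory Defs
  imports Complex_Main
begin

type_synonym vname = nat
type_synonym aname = nat
type_synonym state = "(vname \<Rightarrow> int) \<times> (aname \<Rightarrow> int \<Rightarrow> int)"

datatype aexp =
    N int
  | V vname
  | Rd aname aexp
  | Plus aexp aexp
  | Minus aexp aexp
  | Times aexp aexp
  | Div aexp aexp
  | Mod aexp aexp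

datatype bexp =
    Bc bool
  | Not bexp
  | And bexp bexp
  | Less aexp aexp
  | Eq aexp aexp

datatype com =
    SKIP
  | Assign vname aexp
  | AssignArr aname aexp aexp
  | Seq com com
  | If bexp com com
  | While bexp com

fun aval :: "aexp \<Rightarrow> state \<Rightarrow> int" where
  "aval (N c) s = c"
| "aval (V x) s = fst s x"
| "aval (Rd a e) s = snd s a (aval e s)"
| "aval (Plus e1 e2) s = aval e1 s + aval e2 s"
| "aval (Minus e1 e2) s = aval e1 s - aval e2 s"
| "aval (Times e1 e2) s = aval e1 s * aval e2 s"
| "aval (Div e1 e2) s = aval e1 s div aval e2 s"
| "aval (Mod e1 e2) s = aval e1 s mod aval e2 s"

fun bval :: "bexp \<Rightarrow> state \<Rightarrow> bool" where
  "bval (Bc b) s = b"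
| "bval (Not b) s = (\<not> bval b s)"
| "bval (And b1 b2) s = (bval b1 s \<and> bval b2 s)"
| "bval (Less e1 e2) s = (aval e1 s < aval e2 s)"
| "bval (Eq e1 e2) s = (aval e1 s = aval e2 s)"

fun acost :: "aexp \<Rightarrow> nat" where
  "acost (N c) = 1"
| "acost (V x) = 1"
| "acost (Rd a e) = 1 + acost e"
| "acost (Plus e1 e2) = 1 + acost e1 + acost e2"
| "acost (Minus e1 e2) = 1 + acost e1 + acost e2"
| "acost (Times e1 e2) = 1 + acost e1 + acost e2"
| "acost (Div e1 e2) = 1 + acost e1 + acost e2"
| "acost (Mod e1 e2) = 1 + acost e1 + acost e2"

fun bcost :: "bexp \<Rightarrow> nat" where
  "bcost (Bc b) = 1"
| "bcost (Not b) = 1 + bcost b"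
| "bcost (And b1 b2) = 1 + bcost b1 + bcost b2"
| "bcost (Less e1 e2) = 1 + acost e1 + acost e2"
| "bcost (Eq e1 e2) = 1 + acost e1 + acost e2"

inductive big_step :: "com \<times> state \<Rightarrow> nat \<Rightarrow> state \<Rightarrow> bool" where
  Skip: "big_step (SKIP, s) 1 s"
| Assign: "big_step (Assign x e, s) (1 + acost e) ((fst s)(x := aval e s), snd s)"
| AssignArr: "big_step (AssignArr a ei e, s) (1 + acost ei + acost e)
      (fst s, (snd s)(a := (snd s a)(aval ei s := aval e s)))"
| Seq: "big_step (c1, s1) t1 s2 \<Longrightarrow> big_step (c2, s2) t2 s3 \<Longrightarrow>
      big_step (Seq c1 c2, s1) (t1 + t2 + 1) s3"
| IfTrue: "bval b s \<Longrightarrow> big_step (c1, s) t s' \<Longrightarrow>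
      big_step (If b c1 c2, s) (t + bcost b + 1) s'"
| IfFalse: "\<not> bval b s \<Longrightarrow> big_step (c2, s) t s' \<Longrightarrow>
      big_step (If b c1 c2, s) (t + bcost b + 1) s'"
| WhileFalse: "\<not> bval b s \<Longrightarrow> big_step (While b c, s) (bcost b + 1) s"
| WhileTrue: "bval b s1 \<Longrightarrow> big_step (c, s1) t1 s2 \<Longrightarrow>
      big_step (While b c, s2) t2 s3 \<Longrightarrow>
      big_step (While b c, s1) (t1 + t2 + bcost b + 1) s3"

definition init_state :: "nat \<Rightarrow> nat \<Rightarrow> nat \<Rightarrow> state" where
  "init_state n k i =
     ((\<lambda>_. 0)(0 := int n, 1 := int k, 2 := int i), (\<lambda>_ _. 0))"

definition output_seq :: "nat \<Rightarrow> state \<Rightarrow> int list" where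
  "output_seq k s = map (\<lambda>j. snd s 0 (int j)) [0..<k]"

text \<open>Multisets of k elements from {0,...,n-1}, represented by the sequence of
  their elements in non-increasing order.\<close>

definition msets_seq :: "nat \<Rightarrow> nat \<Rightarrow> int list set" where
  "msets_seq n k = {xs. length xs = k \<and> sorted_wrt (\<ge>) xs \<and> set xs \<subseteq> {0..<int n}}"

definition mset_rank :: "nat \<Rightarrow> nat \<Rightarrow> int list \<Rightarrow> nat" where
  "mset_rank n k ys = card {xs \<in> msets_seq n k. (xs, ys) \<in> lexord {(a, b). a < b}}"

end

theory Submission
  imports Defs
begin


abbreviation S where "S \<equiv> msets_seq"

lemma S_0: "S n 0 = {[]}"
  by (auto simp: msets_seq_def)

lemma S_Suc: "S M (Suc K) = (\<Union>a\<in>{..<M}. (Cons (int a)) ` S (Suc a) K)"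
proof (rule set_eqI, rule iffI)
  fix xs assume "xs \<in> S M (Suc K)"
  then obtain x as where xs: "xs = x # as" and L: "length as = K" and so: "sorted_wrt (\<ge>) (x#as)"
    and st: "set (x#as) \<subseteq> {0..<int M}"
    unfolding msets_seq_def by (cases xs) auto
  have x0: "0 \<le> x" "x < int M" using st by auto
  have "as \<in> S (Suc (nat x)) K" using L so st x0 unfolding msets_seq_def
    by (auto simp: subset_iff)
  moreover have "nat x < M" using x0 by auto
  ultimately show "xs \<in> (\<Union>a\<in>{..<M}. (Cons (int a)) ` S (Suc a) K)"
    using xs x0 by (auto intro!: bexI[of _ "nat x"])
next
  fix xs assume "xs \<in> (\<Union>a\<in>{..<M}. (Cons (int a)) ` S (Suc a) K)"
  then obtain a as where "a < M" "as \<in> S (Suc a) K" "xs = int a # as" by auto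
  then show "xs \<in> S M (Suc K)" unfolding msets_seq_def by (auto simp: subset_iff)
qed

lemma S_fin: "finite (S n k)"
proof (induction k arbitrary: n)
  case 0 then show ?case by (simp add: S_0)
next
  case (Suc k) then show ?case by (simp add: S_Suc)
qed

lemma hockey: "(\<Sum>a<y. (a + K) choose K) = (y + K) choose Suc K"
  by (induction y) auto

lemma card_S: "card (S (Suc m) K) = (m + K) choose K"
proof (induction K arbitrary: m)
  case 0 then show ?case by (simp add: S_0)
next
  case (Suc K)
  have "card (S (Suc m) (Suc K)) = (\<Sum>a<Suc m. card ((Cons (int a)) ` S (Suc a) K))"
    unfolding S_Suc by (rule card_UN_disjoint) (auto simp: S_fin)
  also have "\<dots> = (\<Sum>a<Suc m. (a + K) choose K)"
    by (rule sum.cong) (auto simp: card_image Suc)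
  also have "\<dots> = (m + Suc K) choose Suc K" by (simp add: hockey)
  finally show ?case .
qed

definition f :: "nat \<Rightarrow> nat \<Rightarrow> nat" where "f x K = (x + K - 1) choose K"

abbreviation R where "R \<equiv> lexord {(a::int, b). a < b}"

lemma rank_Nil: "mset_rank M 0 [] = 0"
  by (simp add: mset_rank_def)

lemma rank_Cons:
  assumes "y < M" "ys \<in> S (Suc y) K"
  shows "mset_rank M (Suc K) (int y # ys) = f y (Suc K) + mset_rank (Suc y) K ys"
proof -
  let ?A = "\<Union>a\<in>{..<y}. (Cons (int a)) ` S (Suc a) K"
  let ?B = "(Cons (int y)) ` {as \<in> S (Suc y) K. (as, ys) \<in> R}"
  have eq: "{xs \<in> S M (Suc K). (xs, int y # ys) \<in> R} = ?A \<union> ?B"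
    using assms(1) unfolding S_Suc by (auto 4 3)
  have cA: "card ?A = f y (Suc K)"
  proof -
    have "card ?A = (\<Sum>a<y. card ((Cons (int a)) ` S (Suc a) K))"
      by (rule card_UN_disjoint) (auto simp: S_fin)
    also have "\<dots> = (\<Sum>a<y. (a + K) choose K)"
      by (rule sum.cong) (auto simp: card_image card_S)
    finally show ?thesis by (simp add: hockey f_def)
  qed
  have cB: "card ?B = mset_rank (Suc y) K ys"
    unfolding mset_rank_def by (simp add: card_image)
  have "card (?A \<union> ?B) = card ?A + card ?B"
    by (rule card_Un_disjoint) (auto simp: S_fin)
  then show ?thesis unfolding mset_rank_def eq[unfolded mset_rank_def] using cA cB
    by (simp add: mset_rank_def)
qed



definition HT :: "(state \<Rightarrow> bool) \<Rightarrow> com \<Rightarrow> (state \<Rightarrow> bool) \<Rightarrow> nat \<Rightarrow> bool" where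
  "HT P c Q T \<longleftrightarrow> (\<forall>s. P s \<longrightarrow> (\<exists>t s'. big_step (c, s) t s' \<and> Q s' \<and> t \<le> T))"

lemma HT_Assign: "(\<And>s. P s \<Longrightarrow> Q ((fst s)(x := aval e s), snd s)) \<Longrightarrow> HT P (Assign x e) Q (1 + acost e)"
  unfolding HT_def by (metis big_step.Assign order.refl)

lemma HT_AssignArr: "(\<And>s. P s \<Longrightarrow> Q (fst s, (snd s)(a := (snd s a)(aval ei s := aval e s)))) \<Longrightarrow>
   HT P (AssignArr a ei e) Q (1 + acost ei + acost e)"
  unfolding HT_def by (metis big_step.AssignArr order.refl)

lemma HT_Seq: "HT P c1 Q1 Ta \<Longrightarrow> HT Q1 c2 Q Tc \<Longrightarrow> Ta + Tc + 1 \<le> T \<Longrightarrow> HT P (Seq c1 c2) Q T"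
  unfolding HT_def
proof (intro allI impI)
  fix s assume H: "\<forall>s. P s \<longrightarrow> (\<exists>t s'. big_step (c1, s) t s' \<and> Q1 s' \<and> t \<le> Ta)"
    "\<forall>s. Q1 s \<longrightarrow> (\<exists>t s'. big_step (c2, s) t s' \<and> Q s' \<and> t \<le> Tc)" "Ta + Tc + 1 \<le> T" "P s"
  then obtain t1 s2 where 1: "big_step (c1, s) t1 s2" "Q1 s2" "t1 \<le> Ta" by blast
  with H obtain t2 s3 where 2: "big_step (c2, s2) t2 s3" "Q s3" "t2 \<le> Tc" by blast
  have "big_step (Seq c1 c2, s) (t1+t2+1) s3" by (rule big_step.Seq[OF 1(1) 2(1)])
  then show "\<exists>t s'. big_step (Seq c1 c2, s) t s' \<and> Q s' \<and> t \<le> T"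
    using 1 2 H(3) by (intro exI[of _ "t1+t2+1"] exI[of _ s3]) (auto intro: big_step.Seq)
qed

lemma HT_If: "HT (\<lambda>s. P s \<and> bval b s) c1 Q Ta \<Longrightarrow> HT (\<lambda>s. P s \<and> \<not> bval b s) c2 Q Ta \<Longrightarrow>
   Ta + bcost b + 1 \<le> T \<Longrightarrow> HT P (If b c1 c2) Q T"
  unfolding HT_def by (metis add_le_mono1 big_step.IfFalse big_step.IfTrue order.trans)

lemma HT_Assign_wp: "HT (\<lambda>s. Q ((fst s)(x := aval e s), snd s)) (Assign x e) Q (1 + acost e)"
  by (rule HT_Assign)

lemma HT_Seq_wp: "HT Q1 c2 Q Tc \<Longrightarrow> HT P c1 Q1 Ta \<Longrightarrow> Ta + Tc + 1 \<le> T \<Longrightarrow> HT P (Seq c1 c2) Q T"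
  by (rule HT_Seq)

lemma HT_conseq: "HT P c Q T \<Longrightarrow> (\<And>s. P' s \<Longrightarrow> P s) \<Longrightarrow> (\<And>s. Q s \<Longrightarrow> Q' s) \<Longrightarrow> T \<le> T' \<Longrightarrow> HT P' c Q' T'"
  unfolding HT_def by (meson order.trans)

lemma HT_pt: "(\<And>s0. P s0 \<Longrightarrow> HT (\<lambda>s. s = s0) c Q T) \<Longrightarrow> HT P c Q T"
  unfolding HT_def by blast

lemma while_aux:
  assumes step: "\<And>v. HT (\<lambda>s. Inv s \<and> bval b s \<and> \<mu> s = v) c (\<lambda>s. Inv s \<and> \<mu> s < v) Tb"
  shows "Inv s \<Longrightarrow> \<exists>t s'. big_step (While b c, s) t s' \<and> Inv s' \<and> \<not> bval b s' \<and>
      t \<le> bcost b + 1 + \<mu> s * (Tb + bcost b + 1)"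
proof (induction "\<mu> s" arbitrary: s rule: less_induct)
  case less
  show ?case
  proof (cases "bval b s")
    case False
    have "big_step (While b c,s) (bcost b + 1) s" by (rule big_step.WhileFalse[OF False])
    thus ?thesis using less.prems False
      by (intro exI[of _ "bcost b + 1"] exI[of _ s]) (auto intro: big_step.WhileFalse)
  next
    case True
    from step[of "\<mu> s"] obtain t1 s2 where 1: "big_step (c,s) t1 s2" "Inv s2" "\<mu> s2 < \<mu> s" "t1 \<le> Tb"
      using less.prems True unfolding HT_def by blast
    from less.hyps[OF 1(3) 1(2)] obtain t2 s3 where 2: "big_step (While b c, s2) t2 s3" "Inv s3" "\<not> bval b s3"
      "t2 \<le> bcost b + 1 + \<mu> s2 * (Tb + bcost b + 1)" by blast
    have "(\<mu> s2 + 1) * (Tb + bcost b + 1) \<le> \<mu> s * (Tb + bcost b + 1)"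
      by (rule mult_right_mono) (use 1 in auto)
    moreover have "big_step (While b c,s) (t1 + t2 + bcost b + 1) s3" by (rule big_step.WhileTrue[OF True 1(1) 2(1)])
    ultimately show ?thesis using 1 2 True
      by (intro exI[of _ "t1 + t2 + bcost b + 1"] exI[of _ s3]) (auto intro: big_step.WhileTrue)
  qed
qed

lemma HT_While:
  assumes "\<And>v. HT (\<lambda>s. Inv s \<and> bval b s \<and> \<mu> s = v) c (\<lambda>s. Inv s \<and> \<mu> s < v) Tb"
    and "\<And>s. Inv s \<Longrightarrow> \<not> bval b s \<Longrightarrow> Q s"
    and "\<And>s. P s \<Longrightarrow> Inv s \<and> \<mu> s \<le> M"
    and "bcost b + 1 + M * (Tb + bcost b + 1) \<le> T"
  shows "HT P (While b c) Q T"
  unfolding HT_def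
proof (intro allI impI)
  fix s assume "P s"
  with assms(3) have "Inv s" "\<mu> s \<le> M" by auto
  from while_aux[OF assms(1) this(1)] obtain t s' where "big_step (While b c, s) t s'" "Inv s'" "\<not> bval b s'"
    "t \<le> bcost b + 1 + \<mu> s * (Tb + bcost b + 1)" by blast
  moreover have "\<mu> s * (Tb + bcost b + 1) \<le> M * (Tb + bcost b + 1)" using \<open>\<mu> s \<le> M\<close> by (rule mult_right_mono) simp
  ultimately show "\<exists>t s'. big_step (While b c, s) t s' \<and> Q s' \<and> t \<le> T" using assms(2,4)
    by (intro exI[of _ t] exI[of _ s']) auto
qed

section \<open>Binomial subroutine\<close>

definition BIN :: com where
 "BIN = Seq (Assign 7 (N 1)) (Seq (Assign 8 (N 0)) (While (Less (V 8) (V 1))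
    (Seq (Assign 7 (Div (Times (V 7) (Plus (V 9) (V 8))) (Plus (V 8) (N 1)))) (Assign 8 (Plus (V 8) (N 1))))))"

lemma f_step: "f x (Suc j) = f x j * (x + j) div Suc j"
proof (cases "x + j")
  case 0 then show ?thesis by (simp add: f_def)
next
  case (Suc m)
  have "Suc j * f x (Suc j) = (x + j) * f x j"
    using Suc_times_binomial[of j m] Suc by (simp add: f_def)
  then show ?thesis by (metis mult.commute nonzero_mult_div_cancel_left nat.distinct(1))
qed

lemma f_step_int: "int (f x (Suc j)) = int (f x j) * (int x + int j) div (int j + 1)"
  by (simp add: f_step zdiv_int add.commute flip: of_nat_mult of_nat_add)

lemma BIN_spec:
  assumes a: "fst s0 9 = int x" "fst s0 1 = int K"
  shows "HT (\<lambda>s. s = s0) BIN (\<lambda>s. s = ((fst s0)(7 := int (f x K), 8 := int K), snd s0)) (10 + 20 * K)"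
proof -
  define Inv where "Inv = (\<lambda>s. \<exists>j\<le>K. s = ((fst s0)(7 := int (f x j), 8 := int j), snd s0))"
  have body: "HT (\<lambda>s. Inv s \<and> bval (Less (V 8) (V 1)) s \<and> K - nat (fst s 8) = v)
     (Seq (Assign 7 (Div (Times (V 7) (Plus (V 9) (V 8))) (Plus (V 8) (N 1)))) (Assign 8 (Plus (V 8) (N 1))))
     (\<lambda>s. Inv s \<and> K - nat (fst s 8) < v) 15" for v
  proof (rule HT_Seq_wp[OF HT_Assign_wp HT_Assign])
    fix s assume "Inv s \<and> bval (Less (V 8) (V 1)) s \<and> K - nat (fst s 8) = v"
    then obtain j where j: "j < K" "s = ((fst s0)(7 := int (f x j), 8 := int j), snd s0)" "K - j = v"
      using a unfolding Inv_def by auto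
    show "Inv ((fst ((fst s)(7 := aval (Div (Times (V 7) (Plus (V 9) (V 8))) (Plus (V 8) (N 1))) s), snd s))
               (8 := aval (Plus (V 8) (N 1))
                   ((fst s)(7 := aval (Div (Times (V 7) (Plus (V 9) (V 8))) (Plus (V 8) (N 1))) s), snd s)),
           snd ((fst s)(7 := aval (Div (Times (V 7) (Plus (V 9) (V 8))) (Plus (V 8) (N 1))) s), snd s)) \<and>
          K - nat (fst ((fst ((fst s)(7 := aval (Div (Times (V 7) (Plus (V 9) (V 8))) (Plus (V 8) (N 1))) s), snd s))
               (8 := aval (Plus (V 8) (N 1))
                   ((fst s)(7 := aval (Div (Times (V 7) (Plus (V 9) (V 8))) (Plus (V 8) (N 1))) s), snd s)),
           snd ((fst s)(7 := aval (Div (Times (V 7) (Plus (V 9) (V 8))) (Plus (V 8) (N 1))) s), snd s)) 8) < v"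
      unfolding Inv_def using j a
      by (auto simp: f_step_int intro!: exI[of _ "Suc j"])
  qed simp
  show ?thesis
    unfolding BIN_def
    apply (rule HT_Seq_wp)
      apply (rule HT_Seq_wp)
        apply (rule HT_While[where Inv = Inv and \<mu> = "\<lambda>s. K - nat (fst s 8)" and M = K, OF body])
    using a
          apply (auto simp: Inv_def)[2]
        apply (rule order.refl)
       apply (rule HT_Assign_wp)
      apply (rule order.refl)
     apply (rule HT_Assign)
     apply (simp add: Inv_def f_def)
     apply (rule exI[of _ 0]) apply simp
    apply simp
    done
qed



fun nbits :: "nat \<Rightarrow> nat" where
  "nbits n = (if n = 0 then 0 else Suc (nbits (n div 2)))"

declare nbits.simps[simp del]

lemma nbits_mono: "a \<le> b \<Longrightarrow> nbits a \<le> nbits b"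
proof (induction b arbitrary: a rule: less_induct)
  case (less b)
  show ?case
  proof (cases "a = 0")
    case True then show ?thesis by (simp add: nbits.simps)
  next
    case False
    then have "b \<noteq> 0" "a div 2 \<le> b div 2" "b div 2 < b" using less.prems by (auto intro: div_le_mono)
    with less.IH[of "b div 2" "a div 2"] False show ?thesis
      by (subst (1 2) nbits.simps) simp
  qed
qed

lemma nbits_less: "1 \<le> D \<Longrightarrow> D' \<le> D div 2 \<Longrightarrow> nbits D' < nbits D"
  using nbits_mono[of D' "D div 2"] by (subst (2) nbits.simps) simp

lemma nbits_pow: "1 \<le> D \<Longrightarrow> 2 ^ nbits D \<le> 2 * D"
proof (induction D rule: less_induct)
  case (less D)
  show ?case
  proof (cases "D div 2 = 0")
    case True then have "D = 1" using less.prems by auto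
    then show ?thesis by (simp add: nbits.simps)
  next
    case False
    then have "2 ^ nbits (D div 2) \<le> 2 * (D div 2)" using less.IH[of "D div 2"] less.prems by auto
    then show ?thesis using less.prems by (subst nbits.simps) auto
  qed
qed

lemma f0: "1 \<le> K \<Longrightarrow> f 0 K = 0" by (simp add: f_def binomial_eq_0)

definition BSEARCH :: com where
 "BSEARCH = While (Less (Plus (V 4) (N 1)) (V 5)) (Seq (Assign 6 (Div (Plus (V 4) (V 5)) (N 2)))
    (Seq (Assign 9 (V 6)) (Seq BIN (If (Less (V 7) (Plus (V 2) (N 1))) (Assign 4 (V 6)) (Assign 5 (V 6))))))"

lemma BS_spec:
  assumes a: "fst s1 0 = int Nn" "fst s1 1 = int K" "fst s1 2 = int I" "1 \<le> K" "1 \<le> Nn"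
     "fst s1 4 = 0" "fst s1 5 = int Nn"
  shows "HT (\<lambda>s. s = s1) BSEARCH (\<lambda>s. (\<forall>v<4. fst s v = fst s1 v) \<and> snd s = snd s1 \<and>
     (\<exists>lo. fst s 4 = int lo \<and> lo < Nn \<and> f lo K \<le> I \<and> (Suc lo = Nn \<or> I < f (Suc lo) K)))
     (6 + nbits Nn * (36 + 20 * K))"
proof -
  define BI where "BI = (\<lambda>s. (\<forall>v<4. fst s v = fst s1 v) \<and> snd s = snd s1 \<and>
     (\<exists>lo hi. fst s 4 = int lo \<and> fst s 5 = int hi \<and> lo < hi \<and> hi \<le> Nn \<and> f lo K \<le> I \<and> (hi = Nn \<or> I < f hi K)))"
  define \<mu> where "\<mu> = (\<lambda>s::state. nbits (nat (fst s 5 - fst s 4 - 1)))"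
  have body: "HT (\<lambda>s. BI s \<and> bval (Less (Plus (V 4) (N 1)) (V 5)) s \<and> \<mu> s = v)
     (Seq (Assign 6 (Div (Plus (V 4) (V 5)) (N 2)))
    (Seq (Assign 9 (V 6)) (Seq BIN (If (Less (V 7) (Plus (V 2) (N 1))) (Assign 4 (V 6)) (Assign 5 (V 6))))))
     (\<lambda>s. BI s \<and> \<mu> s < v) (30 + 20 * K)" for v
  proof (rule HT_pt)
    fix s0 assume H: "BI s0 \<and> bval (Less (Plus (V 4) (N 1)) (V 5)) s0 \<and> \<mu> s0 = v"
    then obtain lo hi where lh: "fst s0 4 = int lo" "fst s0 5 = int hi" "lo < hi" "hi \<le> Nn" "f lo K \<le> I"
      "hi = Nn \<or> I < f hi K" "\<forall>v<4. fst s0 v = fst s1 v" "snd s0 = snd s1"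
      unfolding BI_def by auto
    have lt: "lo + 1 < hi" using H lh by simp
    define mid where "mid = (lo + hi) div 2"
    have mid: "lo < mid" "mid < hi" using lt unfolding mid_def by auto
    have mi: "(int lo + int hi) div 2 = int mid" unfolding mid_def by (simp add: zdiv_int)
    define s2 where "s2 = ((fst s0)(6 := int mid, 9 := int mid), snd s0)"
    define s3 where "s3 = ((fst s2)(7 := int (f mid K), 8 := int K), snd s2)"
    have r1: "fst s0 1 = int K" "fst s0 2 = int I" using lh(7) a by auto
    have D: "1 \<le> hi - lo - 1" using lt by simp
    have vv: "v = nbits (hi - lo - 1)" using H lh unfolding \<mu>_def by (simp add: nat_diff_distrib)
    have post: "HT (\<lambda>s. s = s3) (If (Less (V 7) (Plus (V 2) (N 1))) (Assign 4 (V 6)) (Assign 5 (V 6)))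
       (\<lambda>s. BI s \<and> \<mu> s < v) 8"
    proof (rule HT_If[OF HT_Assign HT_Assign])
      fix s assume "s = s3 \<and> bval (Less (V 7) (Plus (V 2) (N 1))) s"
      then have s: "s = s3" "f mid K \<le> I" unfolding s3_def s2_def using r1 by auto
      have "nbits (hi - mid - 1) < nbits (hi - lo - 1)"
        by (rule nbits_less[OF D]) (use lt in \<open>auto simp: mid_def\<close>)
      then show "BI ((fst s)(4 := aval (V 6) s), snd s) \<and> \<mu> ((fst s)(4 := aval (V 6) s), snd s) < v"
        unfolding BI_def \<mu>_def vv using s lh mid
        by (auto simp: s3_def s2_def nat_diff_distrib)
    next
      fix s assume "s = s3 \<and> \<not> bval (Less (V 7) (Plus (V 2) (N 1))) s"
      then have s: "s = s3" "I < f mid K" unfolding s3_def s2_def using r1 by auto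
      have "nbits (mid - lo - 1) < nbits (hi - lo - 1)"
        by (rule nbits_less[OF D]) (use lt in \<open>auto simp: mid_def\<close>)
      then show "BI ((fst s)(5 := aval (V 6) s), snd s) \<and> \<mu> ((fst s)(5 := aval (V 6) s), snd s) < v"
        unfolding BI_def \<mu>_def vv using s lh mid
        by (auto simp: s3_def s2_def nat_diff_distrib)
    qed simp
    have bin: "HT (\<lambda>s. s = s2) BIN (\<lambda>s. s = s3) (10 + 20 * K)"
      unfolding s3_def by (rule BIN_spec) (use r1 in \<open>auto simp: s2_def\<close>)
    show "HT (\<lambda>s. s = s0) (Seq (Assign 6 (Div (Plus (V 4) (V 5)) (N 2)))
      (Seq (Assign 9 (V 6)) (Seq BIN (If (Less (V 7) (Plus (V 2) (N 1))) (Assign 4 (V 6)) (Assign 5 (V 6))))))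
     (\<lambda>s. BI s \<and> \<mu> s < v) (30 + 20 * K)"
      apply (rule HT_Seq[OF HT_Assign HT_Seq[OF HT_Assign HT_Seq[OF bin post]]])
      using lh mi by (auto simp: s2_def)
  qed
  show ?thesis unfolding BSEARCH_def
    apply (rule HT_While[where Inv = BI and \<mu> = \<mu> and M = "nbits Nn", OF body])
    subgoal for s unfolding BI_def
      apply (elim conjE exE)
      apply (subgoal_tac "hi = Suc lo")
       apply auto
      done
    subgoal for s unfolding BI_def \<mu>_def using a by (auto simp: f0 intro!: nbits_mono)
    by simp
qed



lemma f_pascal: "f (Suc lo) (Suc K') = f lo (Suc K') + f (Suc lo) K'"
  by (simp add: f_def)

lemma step_math:
  assumes "lo < Nn" "K = Suc K'" "f lo K \<le> I" "Suc lo = Nn \<or> I < f (Suc lo) K" "I < f Nn K"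
    "\<forall>rest\<in>S Nn K. mset_rank Nn K rest = I \<longrightarrow> p@rest \<in> S n0 k0 \<and> mset_rank n0 k0 (p@rest) = i0"
  shows "I - f lo K < f (Suc lo) K'"
    "\<forall>rest\<in>S (Suc lo) K'. mset_rank (Suc lo) K' rest = I - f lo K \<longrightarrow>
        (p@[int lo])@rest \<in> S n0 k0 \<and> mset_rank n0 k0 ((p@[int lo])@rest) = i0"
proof -
  have "I < f (Suc lo) K" using assms(4,5) by auto
  then show "I - f lo K < f (Suc lo) K'" using assms(2,3) f_pascal[of lo K'] by simp
  show "\<forall>rest\<in>S (Suc lo) K'. mset_rank (Suc lo) K' rest = I - f lo K \<longrightarrow>
        (p@[int lo])@rest \<in> S n0 k0 \<and> mset_rank n0 k0 ((p@[int lo])@rest) = i0"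
  proof (intro ballI impI)
    fix rest assume r: "rest \<in> S (Suc lo) K'" "mset_rank (Suc lo) K' rest = I - f lo K"
    have m: "int lo # rest \<in> S Nn K" using r(1) assms(1) unfolding assms(2) S_Suc by auto
    have "mset_rank Nn K (int lo # rest) = I"
      using rank_Cons[OF assms(1) r(1)] r(2) assms(2,3) by simp
    then show "(p@[int lo])@rest \<in> S n0 k0 \<and> mset_rank n0 k0 ((p@[int lo])@rest) = i0"
      using assms(6) m by auto
  qed
qed

definition REST :: com where
  "REST = Seq (AssignArr 0 (V 3) (V 4)) (Seq (Assign 3 (Plus (V 3) (N 1))) (Seq (Assign 2 (Minus (V 2) (V 7)))
     (Seq (Assign 0 (Plus (V 4) (N 1))) (Assign 1 (Minus (V 1) (N 1))))))"

definition BODY :: com where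
  "BODY = Seq (Seq (Assign 4 (N 0)) (Assign 5 (V 0))) (Seq BSEARCH (Seq (Seq (Assign 9 (V 4)) BIN) REST))"

definition prog :: com where
  "prog = While (Less (N 0) (V 1)) BODY"

definition OI :: "nat \<Rightarrow> nat \<Rightarrow> nat \<Rightarrow> state \<Rightarrow> bool" where
  "OI n0 k0 i0 s = (\<exists>Nn K I p. fst s 0 = int Nn \<and> fst s 1 = int K \<and> fst s 2 = int I \<and> fst s 3 = int (length p)
     \<and> 1 \<le> Nn \<and> Nn \<le> n0 \<and> length p + K = k0 \<and> I < f Nn K \<and> (\<forall>j<length p. snd s 0 (int j) = p!j)
     \<and> (\<forall>rest\<in>S Nn K. mset_rank Nn K rest = I \<longrightarrow> p@rest \<in> S n0 k0 \<and> mset_rank n0 k0 (p@rest) = i0))"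

lemma body_spec:
  "HT (\<lambda>s. OI n0 k0 i0 s \<and> bval (Less (N 0) (V 1)) s \<and> nat (fst s 1) = v) BODY
      (\<lambda>s. OI n0 k0 i0 s \<and> nat (fst s 1) < v) (50 + 20 * k0 + nbits n0 * (36 + 20 * k0))"
proof (rule HT_pt)
  fix s0 assume H: "OI n0 k0 i0 s0 \<and> bval (Less (N 0) (V 1)) s0 \<and> nat (fst s0 1) = v"
  then obtain Nn K I p where o: "fst s0 0 = int Nn" "fst s0 1 = int K" "fst s0 2 = int I" "fst s0 3 = int (length p)"
     "1 \<le> Nn" "Nn \<le> n0" "length p + K = k0" "I < f Nn K" "\<forall>j<length p. snd s0 0 (int j) = p!j"
     "\<forall>rest\<in>S Nn K. mset_rank Nn K rest = I \<longrightarrow> p@rest \<in> S n0 k0 \<and> mset_rank n0 k0 (p@rest) = i0"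
    unfolding OI_def by blast
  have K1: "1 \<le> K" using H o by simp
  then obtain K' where K': "K = Suc K'" by (cases K) auto
  have vK: "v = K" using H o by simp
  define s1 where "s1 = ((fst s0)(4 := 0, 5 := int Nn), snd s0)"
  define P2 where "P2 = (\<lambda>s. (\<forall>v<4. fst s v = fst s1 v) \<and> snd s = snd s1 \<and>
     (\<exists>lo. fst s 4 = int lo \<and> lo < Nn \<and> f lo K \<le> I \<and> (Suc lo = Nn \<or> I < f (Suc lo) K)))"
  have bs: "HT (\<lambda>s. s = s1) BSEARCH P2 (6 + nbits n0 * (36 + 20 * k0))"
  proof (rule HT_conseq[OF BS_spec[of s1 Nn K I]])
    show "6 + nbits Nn * (36 + 20 * K) \<le> 6 + nbits n0 * (36 + 20 * k0)"
      using nbits_mono[OF o(6)] o(7) by (simp add: mult_le_mono)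
  qed (use o K1 in \<open>auto simp: s1_def P2_def\<close>)
  have rest: "HT P2 (Seq (Seq (Assign 9 (V 4)) BIN) REST) (\<lambda>s. OI n0 k0 i0 s \<and> nat (fst s 1) < v) (37 + 20 * k0)"
  proof (rule HT_pt)
    fix s2 assume "P2 s2"
    then obtain lo where l: "\<forall>v<4. fst s2 v = fst s1 v" "snd s2 = snd s1" "fst s2 4 = int lo" "lo < Nn"
      "f lo K \<le> I" "Suc lo = Nn \<or> I < f (Suc lo) K" unfolding P2_def by blast
    have r: "fst s2 0 = int Nn" "fst s2 1 = int K" "fst s2 2 = int I" "fst s2 3 = int (length p)"
      "snd s2 = snd s0" using l(1,2) o by (auto simp: s1_def)
    define s3 where "s3 = ((fst s2)(9 := int lo), snd s2)"
    define s4 where "s4 = ((fst s3)(7 := int (f lo K), 8 := int K), snd s3)"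
    have bin: "HT (\<lambda>s. s = s3) BIN (\<lambda>s. s = s4) (10 + 20 * K)"
      unfolding s4_def by (rule BIN_spec) (use r in \<open>auto simp: s3_def\<close>)
    have sm: "I - f lo K < f (Suc lo) K'"
        "\<forall>rest\<in>S (Suc lo) K'. mset_rank (Suc lo) K' rest = I - f lo K \<longrightarrow>
        (p@[int lo])@rest \<in> S n0 k0 \<and> mset_rank n0 k0 ((p@[int lo])@rest) = i0"
      using step_math[OF l(4) K' l(5,6) o(8,10)] by auto
    have rs: "HT (\<lambda>s. s = s4) REST (\<lambda>s. OI n0 k0 i0 s \<and> nat (fst s 1) < v) 23"
      unfolding REST_def
      apply (rule HT_Seq_wp HT_Assign_wp order.refl)+
       apply (rule HT_AssignArr)
      subgoal for s
        apply (rule conjI)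
        unfolding OI_def
        apply (rule exI[of _ "Suc lo"], rule exI[of _ K'], rule exI[of _ "I - f lo K"], rule exI[of _ "p @ [int lo]"])
        using r l o sm K' vK
        apply (auto simp: s4_def s3_def nth_append of_nat_diff)
        done
      by simp
    show "HT (\<lambda>s. s = s2) (Seq (Seq (Assign 9 (V 4)) BIN) REST) (\<lambda>s. OI n0 k0 i0 s \<and> nat (fst s 1) < v) (37 + 20 * k0)"
      apply (rule HT_Seq[OF HT_Seq[OF HT_Assign bin] rs])
      using r o l by (auto simp: s3_def)
  qed
  show "HT (\<lambda>s. s = s0) BODY (\<lambda>s. OI n0 k0 i0 s \<and> nat (fst s 1) < v) (50 + 20 * k0 + nbits n0 * (36 + 20 * k0))"
    unfolding BODY_def
    apply (rule HT_Seq[OF HT_Seq[OF HT_Assign HT_Assign] HT_Seq[OF bs rest]])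
    using o by (auto simp: s1_def)
qed



lemma nbits_log: assumes "1 \<le> n" shows "real (nbits n) \<le> 1 + log 2 (real n)"
proof -
  have "real (2 ^ nbits n) \<le> real (2 * n)" using nbits_pow[OF assms] by linarith
  then have "(2::real) ^ nbits n \<le> 2 * real n" by simp
  then have "log 2 ((2::real) ^ nbits n) \<le> log 2 (2 * real n)"
    using assms by (subst log_le_cancel_iff) auto
  then show ?thesis using assms by (simp add: log_mult log_nat_power)
qed

lemma time_bound:
  assumes "1 \<le> n" "t \<le> 4 + k * (54 + 20 * k + nbits n * (36 + 20 * k))"
  shows "real t \<le> 134 * (1 + real k ^ 2 * (1 + log 2 (real n)))"
proof -
  define L where "L = 1 + log 2 (real n)"
  have L1: "1 \<le> L" using assms(1) by (simp add: L_def)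
  have nb: "real (nbits n) \<le> L" using nbits_log[OF assms(1)] by (simp add: L_def)
  have "real t \<le> 4 + real k * (54 + 20 * real k + real (nbits n) * (36 + 20 * real k))"
  proof -
    have "real t \<le> real (4 + k * (54 + 20 * k + nbits n * (36 + 20 * k)))"
      using assms(2) by (simp only: of_nat_le_iff)
    then show ?thesis by simp
  qed
  also have "\<dots> \<le> 4 + real k * (54 + 20 * real k + L * (36 + 20 * real k))"
    by (intro add_left_mono mult_left_mono mult_right_mono nb) auto
  also have "\<dots> \<le> 134 * (1 + real k ^ 2 * L)"
  proof -
    have k2: "real k \<le> real k ^ 2" by (cases k) (auto simp: power2_eq_square)
    have a: "real k ^ 2 \<le> real k ^ 2 * L" using L1 by (simp add: mult_le_cancel_left1)
    have b: "real k * L \<le> real k ^ 2 * L" using k2 L1 by (intro mult_right_mono) auto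
    have eq: "real k * (54 + 20 * real k + L * (36 + 20 * real k)) = 54 * real k + 20 * real k ^ 2 + 36 * (real k * L) + 20 * (real k ^ 2 * L)"
      by (simp add: algebra_simps power2_eq_square)
    have c: "0 \<le> real k ^ 2 * L" using L1 by simp
    have gen: "\<And>a b c d::real. a \<le> b \<Longrightarrow> b \<le> d \<Longrightarrow> c \<le> d \<Longrightarrow> 0 \<le> d \<Longrightarrow>
       4 + (54 * a + 20 * b + 36 * c + 20 * d) \<le> 134 + 134 * d" by linarith
    have Y: "134 * (1 + real k ^ 2 * L) = 134 + 134 * (real k ^ 2 * L)" by simp
    show ?thesis unfolding eq Y by (rule gen[OF k2 a b c])
  qed
  finally show ?thesis by (simp add: L_def)
qed

theorem lemma3p3:
  shows "\<exists>prog :: com. \<exists>C :: real. \<forall>n k i :: nat.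
           n \<ge> 1 \<longrightarrow> i < (n - 1 + k) choose k \<longrightarrow>
           (\<exists>t s'. big_step (prog, init_state n k i) t s' \<and>
                   output_seq k s' \<in> msets_seq n k \<and>
                   mset_rank n k (output_seq k s') = i \<and>
                   real t \<le> C * (1 + real k ^ 2 * (1 + log 2 (real n))))"
proof (rule exI[of _ prog], rule exI[of _ "134::real"], intro allI impI)
  fix n k i :: nat assume n: "n \<ge> 1" and i: "i < (n - 1 + k) choose k"
  have init: "OI n k i (init_state n k i)"
    unfolding OI_def init_state_def
    apply (rule exI[of _ n], rule exI[of _ k], rule exI[of _ i], rule exI[of _ "[]"])
    using n i by (auto simp: f_def)
  have "HT (\<lambda>s. s = init_state n k i) prog (\<lambda>s. OI n k i s \<and> \<not> bval (Less (N 0) (V 1)) s)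
           (4 + k * (54 + 20 * k + nbits n * (36 + 20 * k)))"
    unfolding prog_def
    apply (rule HT_While[where Inv = "OI n k i" and \<mu> = "\<lambda>s. nat (fst s 1)" and M = k, OF body_spec])
    using init by (auto simp: init_state_def)
  then obtain t s' where ts: "big_step (prog, init_state n k i) t s'" "OI n k i s'" "\<not> bval (Less (N 0) (V 1)) s'"
      "t \<le> 4 + k * (54 + 20 * k + nbits n * (36 + 20 * k))"
    unfolding HT_def by blast
  then obtain Nn K I p where o: "fst s' 1 = int K" "length p + K = k" "I < f Nn K" "\<forall>j<length p. snd s' 0 (int j) = p!j"
     "\<forall>rest\<in>S Nn K. mset_rank Nn K rest = I \<longrightarrow> p@rest \<in> S n k \<and> mset_rank n k (p@rest) = i"
    unfolding OI_def by blast
  have K0: "K = 0" using ts(3) o(1) by simp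
  have I0: "I = 0" using o(3) K0 by (simp add: f_def)
  have out: "output_seq k s' = p" unfolding output_seq_def
    by (rule nth_equalityI) (use o K0 in auto)
  have "p \<in> S n k \<and> mset_rank n k p = i"
    using o(5)[rule_format, of "[]"] K0 I0 by (simp add: S_0 rank_Nil)
  then show "\<exists>t s'. big_step (prog, init_state n k i) t s' \<and>
                   output_seq k s' \<in> msets_seq n k \<and>
                   mset_rank n k (output_seq k s') = i \<and>
                   real t \<le> 134 * (1 + real k ^ 2 * (1 + log 2 (real n)))"
    using ts(1) time_bound[OF n ts(4)] out by blast
qed


end
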